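(* Let $n\ge 1$, $k\ge 1$, and let $\mathcal P(n,1,1)$ be the set of lattice paths with steps $U=(1,1)$ and $D=(1,-1)$ from $(0,0)$ to $(2n+1,1)$. For each $j=1,2,\dots,2n+1$, the number of paths in $\mathcal P(n,1,1)$ with exactly $k$ circular peaks and exactly $j$ vertices on or below the $x$-axis is independent of $j$ and equals $$\frac{1}{2n+1}\left(\binom{n}{k-1}\binom{n}{k}+\binom{n+1}{k}\binom{n-1}{k-1}\right).$$
   Context: A peak of a path is an occurrence of two consecutive steps $UD$. The circular peaks of a path $p\in\mathcal P(n,1,1)$ are all its peaks, together with its initial vertex in the case that $p$ starts with a down step and ends with an up step. A vertex is on or below the $x$-axis if its $y$-coordinate is $\le 0$. *)

theory Defs
  imports Complex_Main
begin

text \<open>A lattice path is a list of steps; True = U = (1,1), False = D = (1,-1).\<close>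

definition step_val :: "bool \<Rightarrow> int" where
  "step_val s = (if s then 1 else -1)"

text \<open>y-coordinate of the i-th vertex (vertex i has x-coordinate i, 0 <= i <= length p).\<close>
definition height :: "bool list \<Rightarrow> nat \<Rightarrow> int" where
  "height p i = sum_list (map step_val (take i p))"

text \<open>P(n,1,1): paths from (0,0) to (2n+1,1): 2n+1 steps, n+1 of them U.\<close>
definition paths_P :: "nat \<Rightarrow> bool list set" where
  "paths_P n = {p. length p = 2*n+1 \<and> length (filter id p) = n+1}"

definition peaks :: "bool list \<Rightarrow> nat" where
  "peaks p = card {i. Suc i < length p \<and> p ! i \<and> \<not> p ! Suc i}"

text \<open>Circular peaks: all peaks, plus the initial vertex if p starts with D and ends with U.\<close>
definition circ_peaks :: "bool list \<Rightarrow> nat" where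
  "circ_peaks p = peaks p + (if p \<noteq> [] \<and> \<not> hd p \<and> last p then 1 else 0)"

definition low_vertices :: "bool list \<Rightarrow> nat" where
  "low_vertices p = card {i. i \<le> length p \<and> height p i \<le> 0}"

end

theory Submission
  imports Defs
begin


fun lp :: "bool list \<Rightarrow> nat" where
  "lp (a#b#r) = (if a \<and> \<not> b then 1 else 0) + lp (b#r)"
| "lp _ = 0"

lemma peaks_lp: "peaks p = lp p"
proof (induction p rule: lp.induct)
  case (1 a b r)
  have "{i. Suc i < length (a#b#r) \<and> (a#b#r) ! i \<and> \<not> (a#b#r) ! Suc i}
     = (if a \<and> \<not> b then {0} else {}) \<union> Suc ` {i. Suc i < length (b#r) \<and> (b#r) ! i \<and> \<not> (b#r) ! Suc i}"
    (is "?L = ?A \<union> ?B")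
  proof (rule set_eqI)
    fix i show "i \<in> ?L \<longleftrightarrow> i \<in> ?A \<union> ?B"
      by (cases i) auto
  qed
  moreover have "?A \<inter> ?B = {}" by auto
  moreover have "card ?B = peaks (b#r)" unfolding peaks_def by (simp add: card_image)
  ultimately have "peaks (a#b#r) = card ?A + peaks (b#r)"
    unfolding peaks_def by (simp add: card_Un_disjoint)
  then show ?case using 1 by simp
qed (auto simp: peaks_def)

lemma lp_Cons: "lp (a # v) = (if v \<noteq> [] \<and> a \<and> \<not> hd v then 1 else 0) + lp v"
  by (cases v) auto

lemma lp_append: "lp (u @ v) = lp u + lp v + (if u \<noteq> [] \<and> v \<noteq> [] \<and> last u \<and> \<not> hd v then 1 else 0)"
proof (induction u rule: lp.induct)
  case (1 a b r) then show ?case by (simp add: lp_Cons)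
next
  case ("2_2" a) then show ?case by (simp add: lp_Cons)
qed simp

lemma circ_lp: "circ_peaks p = lp p + (if p \<noteq> [] \<and> \<not> hd p \<and> last p then 1 else 0)"
  by (simp add: circ_peaks_def peaks_lp)

lemma circ_rotate1: "circ_peaks (rotate1 p) = circ_peaks p"
proof (cases p)
  case (Cons a w)
  show ?thesis
  proof (cases "w = []")
    case False
    have "lp (a # w) = lp ([a] @ w)" by simp
    then show ?thesis using Cons False
      by (simp only: circ_lp lp_append rotate1.simps) (simp add: hd_append)
  qed (simp add: Cons)
qed simp

lemma circ_rotate: "circ_peaks (rotate s p) = circ_peaks p"
  by (induction s) (auto simp: circ_rotate1)

lemma paths_rotate1: "p \<in> paths_P n \<Longrightarrow> rotate1 p \<in> paths_P n"
  by (cases p) (auto simp: paths_P_def)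

lemma paths_rotate: "p \<in> paths_P n \<Longrightarrow> rotate s p \<in> paths_P n"
  by (induction s) (auto simp: paths_rotate1)

lemma finite_paths: "finite (paths_P n)"
proof -
  have "paths_P n \<subseteq> {xs. set xs \<subseteq> UNIV \<and> length xs = 2*n+1}" by (auto simp: paths_P_def)
  moreover have "finite {xs::bool list. set xs \<subseteq> UNIV \<and> length xs = 2*n+1}"
    by (rule finite_lists_length_eq) simp
  ultimately show ?thesis by (rule finite_subset)
qed



lemma card_filter_sum: "finite A \<Longrightarrow> card {x\<in>A. P x} = (\<Sum>x\<in>A. if P x then 1 else (0::nat))"
proof -
  assume "finite A"
  moreover have "{x\<in>A. P x} = A \<inter> Collect P" by auto
  ultimately show ?thesis by (simp add: sum.If_cases)
qed

lemma inj_rotate: "inj (rotate s)"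
  unfolding rotate_def by (intro inj_fn inj_rotate1)

lemma rotate_back:
  assumes "length q = L" "L > 0"
  shows "rotate s (rotate (L - s mod L) q) = q"
proof -
  have "(s + (L - s mod L)) mod L = 0"
  proof -
    have "s mod L < L" using assms by simp
    have "s + (L - s mod L) = L * (s div L) + L" using \<open>s mod L < L\<close>
      by (metis add.commute add_diff_inverse_nat div_mult_mod_eq group_cancel.add1 mult.commute not_less_iff_gr_or_eq nat_less_le)
    then show ?thesis by simp
  qed
  then show ?thesis using assms by (simp add: rotate_rotate)
qed

lemma rot_count:
  assumes fin: "finite X" and len: "\<forall>p\<in>X. length p = L" and L: "L > 0"
    and cl: "\<forall>p\<in>X. \<forall>s. rotate s p \<in> X"
  shows "(\<Sum>p\<in>X. card {s. s < L \<and> \<Phi> (rotate s p)}) = L * card {q\<in>X. \<Phi> q}"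
proof -
  have "(\<Sum>p\<in>X. card {s. s < L \<and> \<Phi> (rotate s p)})
      = (\<Sum>p\<in>X. \<Sum>s<L. if \<Phi> (rotate s p) then 1 else 0)"
  proof (rule sum.cong)
    fix p assume "p \<in> X"
    have "{s. s < L \<and> \<Phi> (rotate s p)} = {s\<in>{..<L}. \<Phi> (rotate s p)}" by auto
    then show "card {s. s < L \<and> \<Phi> (rotate s p)} = (\<Sum>s<L. if \<Phi> (rotate s p) then 1 else 0)"
      using card_filter_sum[of "{..<L}" "\<lambda>s. \<Phi> (rotate s p)"] by simp
  qed simp
  also have "\<dots> = (\<Sum>s<L. \<Sum>p\<in>X. if \<Phi> (rotate s p) then 1 else 0)"
    by (rule sum.swap)
  also have "\<dots> = (\<Sum>s<L. card {q\<in>X. \<Phi> q})"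
  proof (rule sum.cong)
    fix s assume "s \<in> {..<L}"
    have "(\<Sum>p\<in>X. if \<Phi> (rotate s p) then 1 else 0) = card {p\<in>X. \<Phi> (rotate s p)}"
      using fin by (simp add: card_filter_sum)
    also have "\<dots> = card (rotate s ` {p\<in>X. \<Phi> (rotate s p)})"
      by (rule card_image[symmetric]) (meson inj_rotate inj_on_subset subset_UNIV)
    also have "rotate s ` {p\<in>X. \<Phi> (rotate s p)} = {q\<in>X. \<Phi> q}"
    proof
      show "rotate s ` {p\<in>X. \<Phi> (rotate s p)} \<subseteq> {q\<in>X. \<Phi> q}" using cl by auto
      show "{q\<in>X. \<Phi> q} \<subseteq> rotate s ` {p\<in>X. \<Phi> (rotate s p)}"
      proof
        fix q assume q: "q \<in> {q\<in>X. \<Phi> q}"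
        let ?p = "rotate (L - s mod L) q"
        have e: "rotate s ?p = q" using rotate_back[of q L s] q len L by auto
        have "?p \<in> X" using cl q by auto
        with e q show "q \<in> rotate s ` {p\<in>X. \<Phi> (rotate s p)}"
          by (metis (mono_tags, lifting) image_eqI mem_Collect_eq)
      qed
    qed
    finally show "(\<Sum>p\<in>X. if \<Phi> (rotate s p) then 1 else 0) = card {q\<in>X. \<Phi> q}" .
  qed simp
  also have "\<dots> = L * card {q\<in>X. \<Phi> q}" by simp
  finally show ?thesis .
qed



lemma rank_unique:
  fixes key :: "nat \<Rightarrow> int"
  assumes inj: "inj_on key {..<L}" and j: "1 \<le> j" "j \<le> L"
  shows "card {s. s < L \<and> card {r. r < L \<and> key r \<le> key s} = j} = 1"
proof -
  define rk where "rk s = card {r. r < L \<and> key r \<le> key s}" for s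
  have less: "rk a < rk b" if "a < L" "b < L" "key a < key b" for a b
  proof -
    have "{r. r < L \<and> key r \<le> key a} \<subseteq> {r. r < L \<and> key r \<le> key b}"
      using that by force
    moreover have "b \<notin> {r. r < L \<and> key r \<le> key a}" using that by simp
    moreover have "b \<in> {r. r < L \<and> key r \<le> key b}" using that by simp
    ultimately have "{r. r < L \<and> key r \<le> key a} \<subset> {r. r < L \<and> key r \<le> key b}"
      by blast
    then show ?thesis unfolding rk_def by (intro psubset_card_mono) auto
  qed
  have rk_inj: "inj_on rk {..<L}"
  proof (rule inj_onI)
    fix s t assume s: "s \<in> {..<L}" and t: "t \<in> {..<L}" and e: "rk s = rk t"
    show "s = t"
    proof (rule ccontr)
      assume "s \<noteq> t"
      then have ne: "key s \<noteq> key t" using inj s t by (meson inj_on_eq_iff)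
      from ne have "key s < key t \<or> key t < key s" by linarith
      then show False using less[of s t] less[of t s] s t e by force
    qed
  qed
  have rk_range: "rk ` {..<L} \<subseteq> {1..L}"
  proof
    fix x assume "x \<in> rk ` {..<L}"
    then obtain s where s: "s < L" "x = rk s" by auto
    have "{r. r < L \<and> key r \<le> key s} \<subseteq> {..<L}" by auto
    then have "rk s \<le> L" unfolding rk_def using card_mono[OF finite_lessThan[of L]] by fastforce
    moreover have "rk s \<ge> 1" unfolding rk_def
    proof -
      have "s \<in> {r. r < L \<and> key r \<le> key s}" using s by auto
      moreover have "finite {r. r < L \<and> key r \<le> key s}" by auto
      ultimately show "1 \<le> card {r. r < L \<and> key r \<le> key s}"
        proof -
          have "card {r. r < L \<and> key r \<le> key s} > 0"
            using \<open>s \<in> _\<close> \<open>finite _\<close> by (metis card_gt_0_iff empty_iff)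
          then show ?thesis by simp
        qed
    qed
    ultimately show "x \<in> {1..L}" using s by auto
  qed
  have "card (rk ` {..<L}) = card {1..L}" using rk_inj by (simp add: card_image)
  then have img: "rk ` {..<L} = {1..L}"
    using rk_range by (intro card_subset_eq) auto
  have "j \<in> rk ` {..<L}" using j img by simp
  then obtain s where s: "s < L" "rk s = j" by blast
  have "{s. s < L \<and> rk s = j} = {s}"
  proof (rule set_eqI, rule iffI)
    fix t assume "t \<in> {s. s < L \<and> rk s = j}"
    then have "t < L" "rk t = rk s" using s by auto
    then show "t \<in> {s}" using inj_onD[OF rk_inj, of t s] s by auto
  qed (use s in auto)
  then show ?thesis unfolding rk_def by simp
qed

lemma sum_step: "sum_list (map step_val p) = int (length (filter id p)) - int (length (filter Not p))"
  by (induction p) (auto simp: step_val_def)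

lemma height_full:
  assumes "p \<in> paths_P n" shows "height p (2*n+1) = 1"
proof -
  have "length (filter id p) + length (filter Not p) = 2*n+1"
    using assms sum_length_filter_compl[of id p] by (auto simp: paths_P_def comp_def)
  then show ?thesis using assms by (auto simp: height_def paths_P_def sum_step)
qed

lemma height_rotate:
  assumes len: "length p = L" and s: "s < L" and i: "i < L" and hL: "height p L = 1"
  shows "height (rotate s p) i =
    height p (if s + i < L then s + i else s + i - L) + (if s + i < L then 0 else 1) - height p s"
proof -
  have rot: "rotate s p = drop s p @ take s p" using rotate_drop_take[of s p] len s by simp
  have hs: "height p (s + m) = height p s + sum_list (map step_val (take m (drop s p)))" for m
    by (simp add: height_def take_add)
  show ?thesis
  proof (cases "s + i < L")
    case True
    then have "take i (rotate s p) = take i (drop s p)" using rot len by simp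
    then show ?thesis using True hs[of i] by (simp add: height_def)
  next
    case False
    then have "take i (rotate s p) = drop s p @ take (s + i - L) p" using rot len s i
      by (simp add: min_def add.commute) linarith
    moreover have "sum_list (map step_val (drop s p)) = 1 - height p s"
      using hL hs[of "L - s"] len s by simp
    ultimately show ?thesis using False by (simp add: height_def)
  qed
qed



lemma key_cond:
  fixes a b :: int and L r s :: nat
  assumes "r < L" "s < L"
  shows "(a + (if r < s then 1 else 0) - b \<le> 0) \<longleftrightarrow> (int L * a - int r \<le> int L * b - int s)"
proof -
  have m1: "int L * a + int L \<le> int L * b" if "a < b"
  proof -
    have "int L * (a + 1) \<le> int L * b" using that by (intro mult_left_mono) auto
    then show ?thesis by (simp add: algebra_simps)
  qed
  have m2: "int L * b + int L \<le> int L * a" if "b < a"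
  proof -
    have "int L * (b + 1) \<le> int L * a" using that by (intro mult_left_mono) auto
    then show ?thesis by (simp add: algebra_simps)
  qed
  consider "a < b" | "a = b" | "b < a" by linarith
  then show ?thesis
  proof cases
    case 1 then show ?thesis using m1 assms by auto
  next
    case 2 then show ?thesis by auto
  next
    case 3 then show ?thesis using m2 assms by auto
  qed
qed

definition keyf :: "bool list \<Rightarrow> nat \<Rightarrow> nat \<Rightarrow> int" where
  "keyf p L r = int L * height p r - int r"

lemma keyf_inj:
  assumes "L > 0" shows "inj_on (keyf p L) {..<L}"
proof (rule inj_onI)
  fix r s assume r: "r \<in> {..<L}" and s: "s \<in> {..<L}" and e: "keyf p L r = keyf p L s"
  have "r < L" "s < L" using r s by auto
  show "r = s"
  proof (rule ccontr)
    assume "r \<noteq> s"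
    then consider "r < s" | "s < r" by linarith
    then show False
    proof cases
      case 1
      then have "\<not> (height p r + 1 - height p s \<le> 0) \<or> \<not> (height p s + 0 - height p r \<le> 0)"
        using key_cond[OF \<open>r<L\<close> \<open>s<L\<close>, of "height p r" "height p s"]
              key_cond[OF \<open>s<L\<close> \<open>r<L\<close>, of "height p s" "height p r"] e 1
        unfolding keyf_def by auto
      moreover have "height p r + 1 - height p s \<le> 0" "height p s + 0 - height p r \<le> 0"
        using key_cond[OF \<open>r<L\<close> \<open>s<L\<close>, of "height p r" "height p s"]
              key_cond[OF \<open>s<L\<close> \<open>r<L\<close>, of "height p s" "height p r"] e 1
        unfolding keyf_def by auto
      ultimately show False by blast
    next
      case 2
      have "height p s + 1 - height p r \<le> 0" "height p r + 0 - height p s \<le> 0"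
        using key_cond[OF \<open>s<L\<close> \<open>r<L\<close>, of "height p s" "height p r"]
              key_cond[OF \<open>r<L\<close> \<open>s<L\<close>, of "height p r" "height p s"] e 2
        unfolding keyf_def by auto
      then show False by linarith
    qed
  qed
qed



lemma low_rotate:
  assumes p: "p \<in> paths_P n" and L: "L = 2*n+1" and s: "s < L"
  shows "low_vertices (rotate s p) = card {r. r < L \<and> keyf p L r \<le> keyf p L s}"
proof -
  have len: "length p = L" using p L by (simp add: paths_P_def)
  have hL: "height p L = 1" using height_full[OF p] L by simp
  have hrL: "height (rotate s p) L = 1" using height_full[OF paths_rotate[OF p]] L by simp
  define H where "H i = height (rotate s p) i" for i
  define g where "g i = (if s + i < L then s + i else s + i - L)" for i
  have Hg: "H i = height p (g i) + (if g i < s then 1 else 0) - height p s" if "i < L" for i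
    using height_rotate[OF len s that hL] that s unfolding H_def g_def by auto
  have "{i. i \<le> length (rotate s p) \<and> height (rotate s p) i \<le> 0} = {i. i < L \<and> H i \<le> 0}"
    using hrL len unfolding H_def by (auto simp: le_less)
  then have low: "low_vertices (rotate s p) = card {i. i < L \<and> H i \<le> 0}"
    by (simp add: low_vertices_def)
  have ginj: "inj_on g {..<L}" unfolding g_def by (rule inj_onI) (auto split: if_splits)
  have img: "g ` {i. i < L \<and> H i \<le> 0} = {r. r < L \<and> keyf p L r \<le> keyf p L s}"
  proof (rule set_eqI, rule iffI)
    fix r assume "r \<in> g ` {i. i < L \<and> H i \<le> 0}"
    then obtain i where i: "i < L" "H i \<le> 0" "r = g i" by auto
    have "g i < L" using i s unfolding g_def by auto
    then show "r \<in> {r. r < L \<and> keyf p L r \<le> keyf p L s}"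
      using i Hg[OF i(1)] key_cond[OF \<open>g i < L\<close> s, of "height p (g i)" "height p s"]
      unfolding keyf_def by auto
  next
    fix r assume r: "r \<in> {r. r < L \<and> keyf p L r \<le> keyf p L s}"
    define i where "i = (if s \<le> r then r - s else r + L - s)"
    have i: "i < L" "g i = r" using r s unfolding i_def g_def by auto
    have "H i \<le> 0" using r Hg[OF i(1)] i key_cond[of r L s "height p r" "height p s"] s
      unfolding keyf_def by auto
    then show "r \<in> g ` {i. i < L \<and> H i \<le> 0}" using i by (metis (mono_tags, lifting) image_eqI mem_Collect_eq)
  qed
  have "card {i. i < L \<and> H i \<le> 0} = card (g ` {i. i < L \<and> H i \<le> 0})"
    by (rule card_image[symmetric]) (rule inj_on_subset[OF ginj], auto)
  then show ?thesis using low img by simp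
qed

lemma low_count:
  assumes p: "p \<in> paths_P n" and j: "1 \<le> j" "j \<le> 2*n+1"
  shows "card {s. s < 2*n+1 \<and> low_vertices (rotate s p) = j} = 1"
proof -
  have "{s. s < 2*n+1 \<and> low_vertices (rotate s p) = j}
      = {s. s < 2*n+1 \<and> card {r. r < 2*n+1 \<and> keyf p (2*n+1) r \<le> keyf p (2*n+1) s} = j}"
    using low_rotate[OF p refl] by auto
  also have "card \<dots> = 1" by (rule rank_unique[OF keyf_inj j]) simp
  finally show ?thesis .
qed



lemma valley_count:
  assumes len: "length p = L" and L: "L \<ge> 2"
  shows "card {s. s < L \<and> \<not> hd (rotate s p) \<and> last (rotate s p)} = circ_peaks p"
proof -
  have hd: "hd (rotate s p) = p ! s" if "s < L" for s
  proof -
    have "p \<noteq> []" using len L by auto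
    then show ?thesis using hd_rotate_conv_nth[of p s] len that by simp
  qed
  have last: "last (rotate s p) = p ! (if s = 0 then L - 1 else s - 1)" if "s < L" for s
  proof -
    have "last (rotate s p) = rotate s p ! (L - 1)"
      using len L last_conv_nth[of "rotate s p"] by (cases "rotate s p = []") auto
    also have "\<dots> = p ! ((s + (L - 1)) mod L)" using nth_rotate[of "L - 1" p s] len L by simp
    also have "(s + (L - 1)) mod L = (if s = 0 then L - 1 else s - 1)"
    proof (cases "s = 0")
      case False
      then have "s + (L - 1) = (s - 1) + L" using L by simp
      then have "(s + (L - 1)) mod L = ((s - 1) + L) mod L" by (simp only:)
      also have "\<dots> = (s - 1) mod L" by (rule mod_add_self2)
      also have "\<dots> = s - 1" using that by simp
      finally show ?thesis using False by simp
    qed (use L in simp)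
    finally show ?thesis .
  qed
  define A where "A = {i. Suc i < L \<and> p ! i \<and> \<not> p ! Suc i}"
  have "{s. s < L \<and> \<not> hd (rotate s p) \<and> last (rotate s p)}
      = (if \<not> p ! 0 \<and> p ! (L - 1) then {0} else {}) \<union> Suc ` A"
  proof (rule set_eqI)
    fix s
    show "s \<in> {s. s < L \<and> \<not> hd (rotate s p) \<and> last (rotate s p)} \<longleftrightarrow>
          s \<in> (if \<not> p ! 0 \<and> p ! (L - 1) then {0} else {}) \<union> Suc ` A"
    proof (cases s)
      case 0 then show ?thesis using hd[of 0] last[of 0] L unfolding A_def by auto
    next
      case (Suc i)
      then show ?thesis using hd[of s] last[of s] L unfolding A_def by auto
    qed
  qed
  moreover have "card (Suc ` A) = card A" by (simp add: card_image)
  moreover have "finite A" unfolding A_def by (rule finite_subset[of _ "{..<L}"]) auto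
  ultimately have "card {s. s < L \<and> \<not> hd (rotate s p) \<and> last (rotate s p)}
      = (if \<not> p ! 0 \<and> p ! (L - 1) then 1 else 0) + card A"
    by (simp add: card_Un_disjoint)
  moreover have "peaks p = card A" unfolding peaks_def A_def using len by simp
  moreover have pne: "p \<noteq> []" using len L by auto
  moreover have "hd p = p ! 0" using pne by (simp add: hd_conv_nth)
  moreover have "last p = p ! (L - 1)" using pne len by (simp add: last_conv_nth)
  ultimately show ?thesis unfolding circ_peaks_def by simp
qed



fun blk :: "nat list \<Rightarrow> nat list \<Rightarrow> bool list" where
  "blk (y#ys) (x#xs) = replicate y False @ replicate x True @ blk ys xs"
| "blk _ _ = []"

definition cmp :: "nat \<Rightarrow> nat \<Rightarrow> nat list set" where
  "cmp k a = {xs. length xs = k \<and> (\<forall>x\<in>set xs. 0 < x) \<and> sum_list xs = a}"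

definition W :: "nat \<Rightarrow> nat \<Rightarrow> nat \<Rightarrow> bool list set" where
  "W b a m = {w. w \<noteq> [] \<and> \<not> hd w \<and> last w \<and> length (filter Not w) = b \<and> length (filter id w) = a \<and> lp w = m}"

lemma lp_rep: "lp (replicate n c) = 0"
proof (induction n)
  case (Suc n) then show ?case by (cases n) (auto simp: lp_Cons)
qed simp

lemma lp_blockF:
  assumes "0 < y" "0 < x" "r = [] \<or> \<not> hd r"
  shows "lp (replicate y False @ replicate x True @ r) = lp r + (if r = [] then 0 else 1)"
  using assms by (auto simp: lp_append lp_rep)

lemma tw_rep: "P c \<Longrightarrow> (zs = [] \<or> \<not> P (hd zs)) \<Longrightarrow> takeWhile P (replicate n c @ zs) = replicate n c"
  by (induction n) (cases zs, auto)+

lemma dw_rep: "P c \<Longrightarrow> (zs = [] \<or> \<not> P (hd zs)) \<Longrightarrow> dropWhile P (replicate n c @ zs) = zs"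
  by (induction n) (cases zs, auto)+

lemma blockF_inj:
  assumes "0 < x" "0 < x'" "r = [] \<or> \<not> hd r" "r' = [] \<or> \<not> hd r'"
    and e: "replicate y False @ replicate x True @ r = replicate y' False @ replicate x' True @ r'"
  shows "y = y' \<and> x = x' \<and> r = r'"
proof -
  have h1: "replicate x True @ r = [] \<or> \<not> Not (hd (replicate x True @ r))" using assms by simp
  have h2: "replicate x' True @ r' = [] \<or> \<not> Not (hd (replicate x' True @ r'))" using assms by simp
  have "takeWhile Not (replicate y False @ replicate x True @ r) = replicate y False"
    by (rule tw_rep) (use h1 in auto)
  moreover have "takeWhile Not (replicate y' False @ replicate x' True @ r') = replicate y' False"
    by (rule tw_rep) (use h2 in auto)
  ultimately have yy: "y = y'" using e by (metis length_replicate)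
  with e have e2: "replicate x True @ r = replicate x' True @ r'" by simp
  have "takeWhile id (replicate x True @ r) = replicate x True"
    by (rule tw_rep) (use assms in auto)
  moreover have "takeWhile id (replicate x' True @ r') = replicate x' True"
    by (rule tw_rep) (use assms in auto)
  ultimately have xx: "x = x'" using e2 by (metis length_replicate)
  with e2 yy show ?thesis by simp
qed

definition pos :: "nat list \<Rightarrow> bool" where "pos xs = (\<forall>x\<in>set xs. 0 < x)"

lemma blk_facts:
  assumes "length ys = length xs" "pos ys" "pos xs"
  shows "length (filter Not (blk ys xs)) = sum_list ys \<and> length (filter id (blk ys xs)) = sum_list xs
    \<and> (blk ys xs = [] \<longleftrightarrow> ys = []) \<and> (ys \<noteq> [] \<longrightarrow> \<not> hd (blk ys xs) \<and> last (blk ys xs))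
    \<and> lp (blk ys xs) = length ys - 1"
  using assms
proof (induction ys arbitrary: xs)
  case Nil then show ?case by simp
next
  case (Cons y ys)
  then obtain x xs' where xs: "xs = x # xs'" by (cases xs) auto
  have IH: "length (filter Not (blk ys xs')) = sum_list ys \<and> length (filter id (blk ys xs')) = sum_list xs'
    \<and> (blk ys xs' = [] \<longleftrightarrow> ys = []) \<and> (ys \<noteq> [] \<longrightarrow> \<not> hd (blk ys xs') \<and> last (blk ys xs'))
    \<and> lp (blk ys xs') = length ys - 1"
    using Cons xs by (intro Cons.IH) (auto simp: pos_def)
  have y: "0 < y" and x: "0 < x" using Cons.prems xs by (auto simp: pos_def)
  have r: "blk ys xs' = [] \<or> \<not> hd (blk ys xs')" using IH by auto
  have lp: "lp (blk (y#ys) xs) = lp (blk ys xs') + (if blk ys xs' = [] then 0 else 1)"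
    using lp_blockF[OF y x r] xs by simp
  show ?case
  proof (intro conjI)
    show "lp (blk (y # ys) xs) = length (y # ys) - 1"
      using lp IH by (cases ys) auto
    show "y # ys \<noteq> [] \<longrightarrow> \<not> hd (blk (y # ys) xs) \<and> last (blk (y # ys) xs)"
      using IH x y xs by (cases "ys = []") (auto simp: last_append)
  qed (use IH xs y in \<open>auto simp: id_def\<close>)
qed

lemma blk_inj:
  assumes "length ys = length xs" "pos ys" "pos xs" "length ys' = length xs'" "pos ys'" "pos xs'"
    "blk ys xs = blk ys' xs'"
  shows "ys = ys' \<and> xs = xs'"
  using assms
proof (induction ys arbitrary: xs ys' xs')
  case Nil
  then have "blk ys' xs' = []" by simp
  then have "ys' = []" using blk_facts[OF Nil(4-6)] by simp
  then show ?case using Nil by simp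
next
  case (Cons y ys)
  then obtain x xs1 where xs: "xs = x # xs1" by (cases xs) auto
  have "blk ys' xs' \<noteq> []" using Cons.prems blk_facts[OF Cons(2-4)] by simp
  then have "ys' \<noteq> []" by auto
  then obtain y' ys1' where ys': "ys' = y' # ys1'" by (cases ys') auto
  then obtain x' xs1' where xs': "xs' = x' # xs1'" using Cons.prems by (cases xs') auto
  have p: "length ys = length xs1" "pos ys" "pos xs1" "length ys1' = length xs1'" "pos ys1'" "pos xs1'"
    "0 < x" "0 < x'"
    using Cons.prems xs ys' xs' by (auto simp: pos_def)
  have r: "blk ys xs1 = [] \<or> \<not> hd (blk ys xs1)" using blk_facts[OF p(1-3)] by auto
  have r': "blk ys1' xs1' = [] \<or> \<not> hd (blk ys1' xs1')" using blk_facts[OF p(4-6)] by auto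
  have "y = y' \<and> x = x' \<and> blk ys xs1 = blk ys1' xs1'"
    by (rule blockF_inj[OF p(7,8) r r']) (use Cons.prems xs ys' xs' in simp)
  moreover have "ys = ys1' \<and> xs1 = xs1'" using Cons.IH[OF p(1-6)] calculation by simp
  ultimately show ?case using xs ys' xs' by simp
qed



lemma tw_all: "takeWhile P w = replicate (length (takeWhile P w)) c" if "\<And>z. P z \<Longrightarrow> z = c"
  by (metis replicate_length_same set_takeWhileD that)

lemma decomp:
  assumes "w \<noteq> []" "\<not> hd w" "last w"
  shows "\<exists>y x r. 0 < y \<and> 0 < x \<and> (r = [] \<or> (\<not> hd r \<and> last r)) \<and>
     w = replicate y False @ replicate x True @ r"
proof -
  define y where "y = length (takeWhile Not w)"
  define w1 where "w1 = dropWhile Not w"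
  define x where "x = length (takeWhile id w1)"
  define r where "r = dropWhile id w1"
  have tw: "takeWhile Not w = replicate y False" unfolding y_def by (rule tw_all) auto
  have w: "w = replicate y False @ w1" using tw unfolding w1_def by (metis takeWhile_dropWhile_id)
  have y: "0 < y" using assms unfolding y_def by (cases w) auto
  have w1ne: "w1 \<noteq> []"
  proof
    assume "w1 = []"
    then have "w = replicate y False" using w by simp
    then show False using assms y by simp
  qed
  have hw1: "hd w1" using hd_dropWhile[OF w1ne[unfolded w1_def]] unfolding w1_def by simp
  have tw1: "takeWhile id w1 = replicate x True" unfolding x_def by (rule tw_all) auto
  have w1: "w1 = replicate x True @ r" using tw1 unfolding r_def by (metis takeWhile_dropWhile_id)
  have x: "0 < x" using w1ne hw1 unfolding x_def by (cases w1) auto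
  have "r = [] \<or> (\<not> hd r \<and> last r)"
  proof (cases "r = []")
    case False
    have "\<not> hd r" using hd_dropWhile[of id w1] False unfolding r_def by simp
    moreover have "last r = last w" using w w1 False by simp
    ultimately show ?thesis using assms by simp
  qed simp
  then show ?thesis using x y w w1 by blast
qed

lemma blk_surj:
  "w \<in> W b a m \<Longrightarrow> \<exists>ys xs. length ys = Suc m \<and> length xs = Suc m \<and> pos ys \<and> pos xs
      \<and> sum_list ys = b \<and> sum_list xs = a \<and> blk ys xs = w"
proof (induction m arbitrary: w a b)
  case (0 w a b)
  then have "w \<noteq> []" "\<not> hd w" "last w" by (auto simp: W_def)
  from decomp[OF this] obtain y x r where d: "0 < y" "0 < x" "r = [] \<or> (\<not> hd r \<and> last r)"
    "w = replicate y False @ replicate x True @ r" by blast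
  have "lp w = lp r + (if r = [] then 0 else 1)" using lp_blockF[of y x r] d by auto
  then have "r = []" using 0 by (auto simp: W_def split: if_splits)
  then have "blk [y] [x] = w" "b = y" "a = x" using d 0 by (auto simp: W_def)
  then show ?case using d by (intro exI[of _ "[y]"] exI[of _ "[x]"]) (auto simp: pos_def)
next
  case (Suc m w a b)
  then have "w \<noteq> []" "\<not> hd w" "last w" by (auto simp: W_def)
  from decomp[OF this] obtain y x r where d: "0 < y" "0 < x" "r = [] \<or> (\<not> hd r \<and> last r)"
    "w = replicate y False @ replicate x True @ r" by blast
  have "lp w = lp r + (if r = [] then 0 else 1)" using lp_blockF[of y x r] d by auto
  then have rne: "r \<noteq> []" and lpr: "lp r = m" using Suc.prems by (auto simp: W_def split: if_splits)
  have cnt: "length (filter Not w) = y + length (filter Not r)" "length (filter id w) = x + length (filter id r)"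
    using d by (auto simp: id_def)
  have "r \<in> W (b - y) (a - x) m" using Suc.prems rne lpr d cnt by (auto simp: W_def)
  from Suc.IH[OF this] obtain ys xs where h: "length ys = Suc m" "length xs = Suc m" "pos ys" "pos xs"
    "sum_list ys = b - y" "sum_list xs = a - x" "blk ys xs = r" by blast
  have "b = y + (b - y)" "a = x + (a - x)" using Suc.prems cnt by (auto simp: W_def)
  then show ?case using h d
    by (intro exI[of _ "y # ys"] exI[of _ "x # xs"]) (auto simp: pos_def)
qed



lemma W_eq: "W b a m = (\<lambda>(ys,xs). blk ys xs) ` (cmp (Suc m) b \<times> cmp (Suc m) a)"
proof
  show "W b a m \<subseteq> (\<lambda>(ys,xs). blk ys xs) ` (cmp (Suc m) b \<times> cmp (Suc m) a)"
  proof
    fix w assume "w \<in> W b a m"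
    from blk_surj[OF this] obtain ys xs where h: "length ys = Suc m" "length xs = Suc m" "pos ys" "pos xs"
      "sum_list ys = b" "sum_list xs = a" "blk ys xs = w" by blast
    then have "(ys, xs) \<in> cmp (Suc m) b \<times> cmp (Suc m) a" by (auto simp: cmp_def pos_def)
    then show "w \<in> (\<lambda>(ys,xs). blk ys xs) ` (cmp (Suc m) b \<times> cmp (Suc m) a)"
      using h(7) by force
  qed
  show "(\<lambda>(ys,xs). blk ys xs) ` (cmp (Suc m) b \<times> cmp (Suc m) a) \<subseteq> W b a m"
  proof
    fix w assume "w \<in> (\<lambda>(ys,xs). blk ys xs) ` (cmp (Suc m) b \<times> cmp (Suc m) a)"
    then obtain ys xs where h: "ys \<in> cmp (Suc m) b" "xs \<in> cmp (Suc m) a" "w = blk ys xs" by auto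
    then have p: "length ys = length xs" "pos ys" "pos xs" by (auto simp: cmp_def pos_def)
    have "ys \<noteq> []" using h by (auto simp: cmp_def)
    then show "w \<in> W b a m" using blk_facts[OF p] h by (auto simp: W_def cmp_def)
  qed
qed

lemma card_W: "card (W b a m) = card (cmp (Suc m) b) * card (cmp (Suc m) a)"
proof -
  have "inj_on (\<lambda>(ys,xs). blk ys xs) (cmp (Suc m) b \<times> cmp (Suc m) a)"
  proof (rule inj_onI)
    fix u v assume u: "u \<in> cmp (Suc m) b \<times> cmp (Suc m) a" and v: "v \<in> cmp (Suc m) b \<times> cmp (Suc m) a"
      and e: "(\<lambda>(ys,xs). blk ys xs) u = (\<lambda>(ys,xs). blk ys xs) v"
    obtain ys xs where "u = (ys, xs)" by (cases u)
    moreover obtain ys' xs' where "v = (ys', xs')" by (cases v)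
    ultimately show "u = v" using blk_inj[of ys xs ys' xs'] u v e by (auto simp: cmp_def pos_def)
  qed
  then show ?thesis unfolding W_eq by (simp add: card_image card_cartesian_product)
qed

lemma sum_map_Suc: "sum_list (map Suc l) = sum_list l + length l"
  by (induction l) auto

lemma card_comp:
  assumes "1 \<le> k" "1 \<le> a" shows "card (cmp k a) = (a - 1) choose (k - 1)"
proof (cases "k \<le> a")
  case True
  have "cmp k a = map Suc ` {l. length l = k \<and> sum_list l = a - k}"
  proof
    show "cmp k a \<subseteq> map Suc ` {l. length l = k \<and> sum_list l = a - k}"
    proof
      fix xs assume xs: "xs \<in> cmp k a"
      define l where "l = map (\<lambda>x. x - 1) xs"
      have "\<forall>x\<in>set xs. 0 < x" using xs unfolding cmp_def by auto
      then have "map Suc l = xs" unfolding l_def by (induction xs) auto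
      moreover have "length l = k" using xs unfolding l_def cmp_def by simp
      moreover have "sum_list l = a - k"
      proof -
        have "sum_list xs = sum_list l + length l" using \<open>map Suc l = xs\<close> sum_map_Suc[of l] by simp
        then show ?thesis using xs \<open>length l = k\<close> unfolding cmp_def by auto
      qed
      ultimately show "xs \<in> map Suc ` {l. length l = k \<and> sum_list l = a - k}"
        by (metis (mono_tags, lifting) image_eqI mem_Collect_eq)
    qed
    show "map Suc ` {l. length l = k \<and> sum_list l = a - k} \<subseteq> cmp k a"
      using True by (auto simp: cmp_def sum_map_Suc)
  qed
  moreover have "inj (map Suc)" by simp
  ultimately have "card (cmp k a) = card {l::nat list. length l = k \<and> sum_list l = a - k}"
    by (metis card_image inj_on_subset subset_UNIV)
  also have "\<dots> = (a - k + k - 1) choose (a - k)" by (rule card_length_sum_list)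
  also have "\<dots> = (a - 1) choose (a - k)" using True by simp
  also have "\<dots> = (a - 1) choose (k - 1)"
    using binomial_symmetric[of "k - 1" "a - 1"] True assms by simp
  finally show ?thesis .
next
  case False
  have "cmp k a = {}"
  proof -
    have "length xs \<le> sum_list xs" if "\<forall>x\<in>set xs. 0 < x" for xs :: "nat list"
      using that by (induction xs) auto
    then show ?thesis using False unfolding cmp_def by fastforce
  qed
  then show ?thesis using False assms by simp
qed



theorem theorem8:
  fixes n k j :: nat
  assumes "n \<ge> 1" and "k \<ge> 1" and "1 \<le> j" and "j \<le> 2*n+1"
  shows "real (card {p \<in> paths_P n. circ_peaks p = k \<and> low_vertices p = j}) =
    (real (n choose (k-1)) * real (n choose k) + real ((n+1) choose k) * real ((n-1) choose (k-1)))
      / real (2*n+1)"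
proof -
  define L where "L = 2*n+1"
  define Pk where "Pk = {p \<in> paths_P n. circ_peaks p = k}"
  have finP: "finite Pk" unfolding Pk_def using finite_paths by simp
  have lenP: "\<forall>p\<in>Pk. length p = L" unfolding Pk_def L_def paths_P_def by simp
  have L0: "L > 0" unfolding L_def by simp
  have clP: "\<forall>p\<in>Pk. \<forall>s. rotate s p \<in> Pk" unfolding Pk_def using paths_rotate circ_rotate by simp
  define A where "A = card {p \<in> paths_P n. circ_peaks p = k \<and> low_vertices p = j}"
  have I: "card Pk = L * A"
  proof -
    have "(\<Sum>p\<in>Pk. card {s. s < L \<and> low_vertices (rotate s p) = j}) = L * card {q\<in>Pk. low_vertices q = j}"
      by (rule rot_count[OF finP lenP L0 clP])
    moreover have "(\<Sum>p\<in>Pk. card {s. s < L \<and> low_vertices (rotate s p) = j}) = (\<Sum>p\<in>Pk. 1)"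
      using low_count assms unfolding Pk_def L_def by (intro sum.cong) auto
    moreover have "{q\<in>Pk. low_vertices q = j} = {p \<in> paths_P n. circ_peaks p = k \<and> low_vertices p = j}"
      unfolding Pk_def by auto
    ultimately show ?thesis unfolding A_def by simp
  qed
  define Q where "Q = {q\<in>Pk. \<not> hd q \<and> last q}"
  have II: "k * card Pk = L * card Q"
  proof -
    have "(\<Sum>p\<in>Pk. card {s. s < L \<and> \<not> hd (rotate s p) \<and> last (rotate s p)}) = L * card Q"
      unfolding Q_def by (rule rot_count[OF finP lenP L0 clP])
    moreover have "(\<Sum>p\<in>Pk. card {s. s < L \<and> \<not> hd (rotate s p) \<and> last (rotate s p)}) = (\<Sum>p\<in>Pk. k)"
    proof (rule sum.cong)
      fix p assume p: "p \<in> Pk"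
      have "L \<ge> 2" using assms unfolding L_def by simp
      then show "card {s. s < L \<and> \<not> hd (rotate s p) \<and> last (rotate s p)} = k"
        using valley_count[of p L] p lenP unfolding Pk_def by auto
    qed simp
    ultimately show ?thesis by (simp add: mult.commute)
  qed
  have QW: "Q = W n (n+1) (k-1)"
  proof (rule set_eqI, rule iffI)
    fix q assume "q \<in> Q"
    then have q: "length q = L" "length (filter id q) = n+1" "circ_peaks q = k" "\<not> hd q" "last q"
      unfolding Q_def Pk_def paths_P_def L_def by auto
    have "q \<noteq> []" using q(1) L0 by auto
    then have "lp q = k - 1" using q circ_lp[of q] by simp
    moreover have "length (filter Not q) = n"
      using sum_length_filter_compl[of id q] q unfolding L_def by (simp add: comp_def)
    ultimately show "q \<in> W n (n+1) (k-1)" using q \<open>q \<noteq> []\<close> unfolding W_def by simp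
  next
    fix q assume "q \<in> W n (n+1) (k-1)"
    then have q: "q \<noteq> []" "\<not> hd q" "last q" "length (filter Not q) = n" "length (filter id q) = n+1"
      "lp q = k - 1" unfolding W_def by auto
    have "length q = 2*n+1"
      using sum_length_filter_compl[of id q] q by (simp add: comp_def)
    moreover have "circ_peaks q = k" using q circ_lp[of q] assms by simp
    ultimately show "q \<in> Q" using q unfolding Q_def Pk_def paths_P_def by simp
  qed
  have III: "card Q = ((n-1) choose (k-1)) * (n choose (k-1))"
    unfolding QW card_W using card_comp assms by simp
  have kA: "k * A = ((n-1) choose (k-1)) * (n choose (k-1))"
  proof -
    have "L * (k * A) = L * card Q" using I II by (simp add: algebra_simps)
    then show ?thesis using III L0 by simp
  qed
  have b1: "k * (n choose k) = n * ((n-1) choose (k-1))" using assms times_binomial_minus1_eq by simp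
  have b2: "k * ((n+1) choose k) = (n+1) * (n choose (k-1))"
    using assms times_binomial_minus1_eq[of k "n+1"] by simp
  have "k * ((n choose (k-1)) * (n choose k) + ((n+1) choose k) * ((n-1) choose (k-1)))
      = (n choose (k-1)) * (k * (n choose k)) + (k * ((n+1) choose k)) * ((n-1) choose (k-1))"
    by (simp add: algebra_simps)
  also have "\<dots> = L * (((n-1) choose (k-1)) * (n choose (k-1)))"
    unfolding b1 b2 L_def by (simp add: algebra_simps)
  also have "\<dots> = k * (A * L)" using kA by (simp add: algebra_simps)
  finally have "(n choose (k-1)) * (n choose k) + ((n+1) choose k) * ((n-1) choose (k-1)) = A * L"
    using assms by simp
  then have "real ((n choose (k-1)) * (n choose k) + ((n+1) choose k) * ((n-1) choose (k-1))) = real A * real L"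
    by (metis of_nat_mult)
  then show ?thesis unfolding A_def[symmetric] L_def using L0 by (simp add: field_simps)
qed


end
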